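(* For all integers $t,r\ge 2$, $$F_v(T_{2tr,2r},T_{2tr,2r};2r+1)\le 5F_v(T_{tr,r},T_{tr,r};r+1).$$ In particular, $F_v(T_{4t,4},T_{4t,4};5)\le 50t-25$ for all $t\ge2$.
   Context: All graphs are finite and simple. $T_{n,s}$ is the Turán graph: the complete $s$-partite graph on $n$ vertices with parts as equal as possible (so $T_{st,s}$ is complete $s$-partite with all parts of size $t$; $T_{2t,2}=K_{t,t}$). "A graph $F$ contains $H$" means $F$ has a (not necessarily induced) subgraph isomorphic to $H$. $G\rightarrow(H_1,H_2)^v$ means: for every partition $V(G)=X_1\cup X_2$ there is $i$ such that the subgraph induced by $X_i$ contains $H_i$. $F_v(H_1,H_2;k)$ is the minimum number of vertices of a $K_k$-free graph $G$ with $G\rightarrow(H_1,H_2)^v$. *)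

theory Defs
  imports Main "HOL-Library.Extended_Nat"
begin

definition simple_graph :: "nat set \<Rightarrow> (nat \<Rightarrow> nat \<Rightarrow> bool) \<Rightarrow> bool" where
  "simple_graph V E \<longleftrightarrow> finite V \<and>
     (\<forall>u v. E u v \<longrightarrow> u \<in> V \<and> v \<in> V \<and> u \<noteq> v \<and> E v u)"

text \<open>Turan graph T(n,s): vertices 0..n-1, vertex i in part (i mod s);
  two vertices adjacent iff in different parts. Part sizes differ by at most one.\<close>
definition turan_V :: "nat \<Rightarrow> nat set" where
  "turan_V n = {..<n}"
definition turan_E :: "nat \<Rightarrow> nat \<Rightarrow> nat \<Rightarrow> nat \<Rightarrow> bool" where
  "turan_E n s u v \<longleftrightarrow> u < n \<and> v < n \<and> u mod s \<noteq> v mod s"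

definition complete_V :: "nat \<Rightarrow> nat set" where
  "complete_V k = {..<k}"
definition complete_E :: "nat \<Rightarrow> nat \<Rightarrow> nat \<Rightarrow> bool" where
  "complete_E k u v \<longleftrightarrow> u < k \<and> v < k \<and> u \<noteq> v"

definition induced_E :: "(nat \<Rightarrow> nat \<Rightarrow> bool) \<Rightarrow> nat set \<Rightarrow> nat \<Rightarrow> nat \<Rightarrow> bool" where
  "induced_E E X u v \<longleftrightarrow> u \<in> X \<and> v \<in> X \<and> E u v"

definition contains :: "nat set \<Rightarrow> (nat \<Rightarrow> nat \<Rightarrow> bool) \<Rightarrow> nat set \<Rightarrow> (nat \<Rightarrow> nat \<Rightarrow> bool) \<Rightarrow> bool" where
  "contains V E HV HE \<longleftrightarrow> (\<exists>f. inj_on f HV \<and> f ` HV \<subseteq> V \<and>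
      (\<forall>u\<in>HV. \<forall>v\<in>HV. HE u v \<longrightarrow> E (f u) (f v)))"

definition vertex_arrows :: "nat set \<Rightarrow> (nat \<Rightarrow> nat \<Rightarrow> bool) \<Rightarrow>
    nat set \<Rightarrow> (nat \<Rightarrow> nat \<Rightarrow> bool) \<Rightarrow> nat set \<Rightarrow> (nat \<Rightarrow> nat \<Rightarrow> bool) \<Rightarrow> bool" where
  "vertex_arrows V E H1V H1E H2V H2E \<longleftrightarrow>
     (\<forall>X1 X2. X1 \<union> X2 = V \<and> X1 \<inter> X2 = {} \<longrightarrow>
        contains X1 (induced_E E X1) H1V H1E \<or> contains X2 (induced_E E X2) H2V H2E)"

text \<open>Vertex Folkman number F_v(H1,H2;k) as an extended natural
  (infinity if no such graph exists).\<close>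
definition Fv :: "nat set \<Rightarrow> (nat \<Rightarrow> nat \<Rightarrow> bool) \<Rightarrow> nat set \<Rightarrow> (nat \<Rightarrow> nat \<Rightarrow> bool) \<Rightarrow> nat \<Rightarrow> enat" where
  "Fv H1V H1E H2V H2E k = Inf {enat (card V) | V E. simple_graph V E \<and>
      \<not> contains V E (complete_V k) (complete_E k) \<and> vertex_arrows V E H1V H1E H2V H2E}"

end

theory Submission
  imports Defs
begin

definition blowV :: "nat set \<Rightarrow> nat set" where
  "blowV V = {x. x div 5 \<in> V}"

definition c5adj :: "nat \<Rightarrow> nat \<Rightarrow> bool" where
  "c5adj a b \<longleftrightarrow> (a+1) mod 5 = b \<or> (b+1) mod 5 = a"

definition blowE :: "nat set \<Rightarrow> (nat \<Rightarrow> nat \<Rightarrow> bool) \<Rightarrow> nat \<Rightarrow> nat \<Rightarrow> bool" where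
  "blowE V E x y \<longleftrightarrow> x \<in> blowV V \<and> y \<in> blowV V \<and>
     ((x mod 5 = y mod 5 \<and> E (x div 5) (y div 5)) \<or> c5adj (x mod 5) (y mod 5))"

lemma c5adj_irrefl: "\<not> c5adj a a"
  unfolding c5adj_def by presburger

lemma mod5s: "(b::nat) < 5 \<Longrightarrow> Suc b mod 5 = (if b=4 then 0 else Suc b)"
  by (cases "b=4") auto

lemma c5alt: "a < 5 \<Longrightarrow> b < 5 \<Longrightarrow> c5adj a b \<longleftrightarrow> (b = a+1 \<and> a < 4) \<or> (a = b+1 \<and> b < 4) \<or> (a=4 \<and> b=0) \<or> (a=0\<and>b=4)"
  unfolding c5adj_def by (simp add: mod5s) linarith

lemma c5_tri: assumes "a < 5" "b < 5" "c < 5"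
  shows "\<not> (c5adj a b \<and> c5adj b c \<and> c5adj a c)"
  using assms by (simp add: c5alt) linarith

lemma odd_cycle: "\<exists>i<(5::nat). (P::nat\<Rightarrow>bool) i = P (Suc i mod 5)"
proof -
  have "P 0 = P 1 \<or> P 1 = P 2 \<or> P 2 = P 3 \<or> P 3 = P 4 \<or> P 4 = P 0"
    by (cases "P 0"; cases "P 1"; cases "P 2"; cases "P 3"; cases "P 4") simp_all
  then show ?thesis
  proof (elim disjE)
    assume "P 0 = P 1" then show ?thesis by (intro exI[of _ 0]) simp
  next
    assume "P 1 = P 2" then show ?thesis by (intro exI[of _ 1]) (simp add: numeral_2_eq_2)
  next
    assume "P 2 = P 3" then show ?thesis by (intro exI[of _ 2]) simp
  next
    assume "P 3 = P 4" then show ?thesis by (intro exI[of _ 3]) simp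
  next
    assume "P 4 = P 0" then show ?thesis by (intro exI[of _ 4]) simp
  qed
qed

lemma card_blowV: "finite V \<Longrightarrow> card (blowV V) = 5 * card V"
proof -
  assume fin: "finite V"
  have eq: "blowV V = (\<lambda>(v,i). 5*v+i) ` (V \<times> {..<5})"
  proof
    show "blowV V \<subseteq> (\<lambda>(v,i). 5*v+i) ` (V \<times> {..<5})"
    proof
      fix x assume "x \<in> blowV V"
      then have "(x div 5, x mod 5) \<in> V \<times> {..<5}" unfolding blowV_def by auto
      moreover have "x = (\<lambda>(v,i). 5*v+i) (x div 5, x mod 5)" by simp
      ultimately show "x \<in> (\<lambda>(v,i). 5*v+i) ` (V \<times> {..<5})" by blast
    qed
  next
    show "(\<lambda>(v,i). 5*v+i) ` (V \<times> {..<5}) \<subseteq> blowV V"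
      unfolding blowV_def by auto
  qed
  have inj: "inj_on (\<lambda>(v,i). 5*v+i) (V \<times> {..<5::nat})"
    unfolding inj_on_def by (clarsimp, presburger)
  show ?thesis unfolding eq using card_image[OF inj] fin by (simp add: card_cartesian_product)
qed

lemma simple_blow: "simple_graph V E \<Longrightarrow> simple_graph (blowV V) (blowE V E)"
  unfolding simple_graph_def
proof (intro conjI allI impI)
  assume a: "finite V \<and> (\<forall>u v. E u v \<longrightarrow> u \<in> V \<and> v \<in> V \<and> u \<noteq> v \<and> E v u)"
  have eq: "blowV V = (\<lambda>(v,i). 5*v+i) ` (V \<times> {..<5})"
  proof
    show "blowV V \<subseteq> (\<lambda>(v,i). 5*v+i) ` (V \<times> {..<5})"
    proof
      fix x assume "x \<in> blowV V"
      then have "(x div 5, x mod 5) \<in> V \<times> {..<5}" unfolding blowV_def by auto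
      moreover have "x = (\<lambda>(v,i). 5*v+i) (x div 5, x mod 5)" by simp
      ultimately show "x \<in> (\<lambda>(v,i). 5*v+i) ` (V \<times> {..<5})" by blast
    qed
  qed (auto simp: blowV_def)
  show "finite (blowV V)" unfolding eq using a by auto
  fix u v assume e: "blowE V E u v"
  show "u \<in> blowV V" "v \<in> blowV V" using e unfolding blowE_def by auto
  show "u \<noteq> v" using e a c5adj_irrefl unfolding blowE_def by metis
  show "blowE V E v u" using e a unfolding blowE_def c5adj_def by metis
qed

lemma clique_iff:
  "contains V E (complete_V k) (complete_E k) \<longleftrightarrow>
     (\<exists>S\<subseteq>V. finite S \<and> card S = k \<and> (\<forall>x\<in>S. \<forall>y\<in>S. x \<noteq> y \<longrightarrow> E x y))"
proof
  assume "contains V E (complete_V k) (complete_E k)"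
  then obtain f where f: "inj_on f {..<k}" "f ` {..<k} \<subseteq> V"
    "\<forall>u\<in>{..<k}. \<forall>v\<in>{..<k}. complete_E k u v \<longrightarrow> E (f u) (f v)"
    unfolding contains_def complete_V_def by auto
  show "\<exists>S\<subseteq>V. finite S \<and> card S = k \<and> (\<forall>x\<in>S. \<forall>y\<in>S. x \<noteq> y \<longrightarrow> E x y)"
  proof (intro exI conjI)
    show "f ` {..<k} \<subseteq> V" by fact
    show "finite (f ` {..<k})" by simp
    show "card (f ` {..<k}) = k" using card_image[OF f(1)] by simp
    show "\<forall>x\<in>f ` {..<k}. \<forall>y\<in>f ` {..<k}. x \<noteq> y \<longrightarrow> E x y"
      using f(3) unfolding complete_E_def by (metis imageE lessThan_iff)
  qed
next
  assume "\<exists>S\<subseteq>V. finite S \<and> card S = k \<and> (\<forall>x\<in>S. \<forall>y\<in>S. x \<noteq> y \<longrightarrow> E x y)"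
  then obtain S where S: "S \<subseteq> V" "finite S" "card S = k" "\<forall>x\<in>S. \<forall>y\<in>S. x \<noteq> y \<longrightarrow> E x y"
    by blast
  obtain h where h: "bij_betw h {0..<k} S" using ex_bij_betw_nat_finite[OF S(2)] S(3) by blast
  have lt: "{0..<k} = {..<k}" by auto
  show "contains V E (complete_V k) (complete_E k)"
    unfolding contains_def complete_V_def
  proof (intro exI conjI)
    show "inj_on h {..<k}" using h lt unfolding bij_betw_def by simp
    show "h ` {..<k} \<subseteq> V" using h lt S(1) unfolding bij_betw_def by simp
    show "\<forall>u\<in>{..<k}. \<forall>v\<in>{..<k}. complete_E k u v \<longrightarrow> E (h u) (h v)"
      using h lt S(4) unfolding bij_betw_def complete_E_def inj_on_def by (auto, blast)
  qed
qed

lemma kfree_blow: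
  assumes r1: "r \<ge> 1"
    and nk: "\<not> contains V E (complete_V (r+1)) (complete_E (r+1))"
  shows "\<not> contains (blowV V) (blowE V E) (complete_V (2*r+1)) (complete_E (2*r+1))"
proof
  assume "contains (blowV V) (blowE V E) (complete_V (2*r+1)) (complete_E (2*r+1))"
  then obtain S where S: "S \<subseteq> blowV V" "finite S" "card S = 2*r+1"
    "\<forall>x\<in>S. \<forall>y\<in>S. x \<noteq> y \<longrightarrow> blowE V E x y"
    unfolding clique_iff by blast
  define Sa where "Sa a = {x\<in>S. x mod 5 = a}" for a
  have adj: "c5adj (x mod 5) (y mod 5)" if "x \<in> S" "y \<in> S" "x mod 5 \<noteq> y mod 5" for x y
  proof -
    have "x \<noteq> y" using that by auto
    then have "blowE V E x y" using S(4) that by blast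
    then show ?thesis using that(3) unfolding blowE_def by blast
  qed
  have "S \<noteq> {}" using S(3) by auto
  then obtain x0 where x0: "x0 \<in> S" by blast
  have "\<exists>a b. S \<subseteq> Sa a \<union> Sa b"
  proof (cases "\<forall>y\<in>S. y mod 5 = x0 mod 5")
    case True then show ?thesis unfolding Sa_def by blast
  next
    case False
    then obtain y0 where y0: "y0 \<in> S" "y0 mod 5 \<noteq> x0 mod 5" by blast
    have "S \<subseteq> Sa (x0 mod 5) \<union> Sa (y0 mod 5)"
    proof
      fix z assume z: "z \<in> S"
      show "z \<in> Sa (x0 mod 5) \<union> Sa (y0 mod 5)"
      proof (rule ccontr)
        assume "z \<notin> Sa (x0 mod 5) \<union> Sa (y0 mod 5)"
        then have n: "z mod 5 \<noteq> x0 mod 5" "z mod 5 \<noteq> y0 mod 5" using z unfolding Sa_def by auto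
        have "c5adj (x0 mod 5) (y0 mod 5)" using adj x0 y0 by metis
        moreover have "c5adj (y0 mod 5) (z mod 5)" using adj y0 z n by metis
        moreover have "c5adj (x0 mod 5) (z mod 5)" using adj x0 z n by metis
        ultimately show False using c5_tri[of "x0 mod 5" "y0 mod 5" "z mod 5"] by auto
      qed
    qed
    then show ?thesis by blast
  qed
  then obtain a b where ab: "S \<subseteq> Sa a \<union> Sa b" by blast
  have fin: "finite (Sa c)" for c using S(2) unfolding Sa_def by auto
  have "card S \<le> card (Sa a) + card (Sa b)"
    using card_mono[OF _ ab] card_Un_le[of "Sa a" "Sa b"] fin by fastforce
  then obtain c where c: "card (Sa c) \<ge> r+1" using S(3) by (metis add_le_mono not_less_eq_eq mult_2 add.commute Suc_eq_plus1)
  have injd: "inj_on (\<lambda>x. x div 5) (Sa c)"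
  proof (rule inj_onI)
    fix x y assume "x \<in> Sa c" "y \<in> Sa c" "x div 5 = y div 5"
    then have "x mod 5 = y mod 5" "x div 5 = y div 5" unfolding Sa_def by auto
    then show "x = y" by (metis div_mult_mod_eq)
  qed
  define T where "T = (\<lambda>x. x div 5) ` Sa c"
  have cT: "card T \<ge> r+1" unfolding T_def using card_image[OF injd] c by simp
  have TV: "T \<subseteq> V" unfolding T_def Sa_def using S(1) unfolding blowV_def by auto
  have Tcl: "\<forall>p\<in>T. \<forall>q\<in>T. p \<noteq> q \<longrightarrow> E p q"
  proof (intro ballI impI)
    fix p q assume "p \<in> T" "q \<in> T" "p \<noteq> q"
    then obtain x y where xy: "x \<in> Sa c" "y \<in> Sa c" "p = x div 5" "q = y div 5" "x \<noteq> y"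
      unfolding T_def by auto
    then have "blowE V E x y" using S(4) unfolding Sa_def by auto
    then show "E p q" using xy c5adj_irrefl unfolding blowE_def Sa_def by auto
  qed
  obtain T' where T': "T' \<subseteq> T" "card T' = r+1"
    using obtain_subset_with_card_n[OF cT] by blast
  have "finite T" unfolding T_def using fin by simp
  then have "contains V E (complete_V (r+1)) (complete_E (r+1))"
    unfolding clique_iff
  proof (intro exI conjI)
    show "T' \<subseteq> V" using T' TV by blast
    show "finite T'" using T' \<open>finite T\<close> finite_subset by blast
    show "card T' = r+1" by (rule T'(2))
    show "\<forall>x\<in>T'. \<forall>y\<in>T'. x \<noteq> y \<longrightarrow> E x y" using T'(1) Tcl by blast
  qed
  then show False using nk by blast
qed

lemma qrm: assumes "(r::nat) \<ge> 1" "q < t" "m < r"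
  shows "q*r+m < t*r \<and> (q*r+m) mod r = m \<and> (q*r+m) div r = q"
proof -
  have "(q+1)*r \<le> t*r" using assms by (intro mult_right_mono) auto
  then show ?thesis using assms by auto
qed

lemma divt: assumes "u < 2*t*(r::nat)" shows "u div (2*r) < t"
proof -
  have "u < t*(2*r)" using assms by (simp add: ac_simps)
  then show ?thesis by (rule less_mult_imp_div_less)
qed

lemma combine:
  assumes r1: "r \<ge> 1" and ij: "i < 5" "j < 5" "c5adj i j"
    and X: "X \<subseteq> blowV V"
    and ci: "contains {v\<in>V. 5*v+i \<in> X} (induced_E E {v\<in>V. 5*v+i \<in> X}) (turan_V (t*r)) (turan_E (t*r) r)"
    and cj: "contains {v\<in>V. 5*v+j \<in> X} (induced_E E {v\<in>V. 5*v+j \<in> X}) (turan_V (t*r)) (turan_E (t*r) r)"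
  shows "contains X (induced_E (blowE V E) X) (turan_V (2*t*r)) (turan_E (2*t*r) (2*r))"
proof -
  define Yi where "Yi = {v\<in>V. 5*v+i \<in> X}"
  define Yj where "Yj = {v\<in>V. 5*v+j \<in> X}"
  obtain f where f: "inj_on f {..<t*r}" "f ` {..<t*r} \<subseteq> Yi"
    "\<And>u v. u < t*r \<Longrightarrow> v < t*r \<Longrightarrow> turan_E (t*r) r u v \<Longrightarrow> induced_E E Yi (f u) (f v)"
    using ci unfolding contains_def turan_V_def Yi_def by auto
  obtain g where g: "inj_on g {..<t*r}" "g ` {..<t*r} \<subseteq> Yj"
    "\<And>u v. u < t*r \<Longrightarrow> v < t*r \<Longrightarrow> turan_E (t*r) r u v \<Longrightarrow> induced_E E Yj (g u) (g v)"
    using cj unfolding contains_def turan_V_def Yj_def by auto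
  define \<phi> where "\<phi> u = (u div (2*r))*r + u mod (2*r)" for u
  define \<psi> where "\<psi> u = (u div (2*r))*r + (u mod (2*r) - r)" for u
  define h where "h u = (if u mod (2*r) < r then 5*f(\<phi> u)+i else 5*g(\<psi> u)+j)" for u
  have P1: "\<phi> u < t*r \<and> \<phi> u mod r = u mod (2*r) \<and> \<phi> u div r = u div (2*r)"
    if "u < 2*t*r" "u mod (2*r) < r" for u
    unfolding \<phi>_def using qrm[OF r1 divt[OF that(1)] that(2)] by blast
  have P2: "\<psi> u < t*r \<and> \<psi> u mod r = u mod (2*r) - r \<and> \<psi> u div r = u div (2*r)"
    if "u < 2*t*r" "\<not> u mod (2*r) < r" for u
  proof -
    have "u mod (2*r) < 2*r" using r1 by simp
    then have "u mod (2*r) - r < r" using that by linarith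
    then show ?thesis unfolding \<psi>_def using qrm[OF r1 divt[OF that(1)]] by blast
  qed
  have recon: "u = v" if "u div (2*r) = v div (2*r)" "u mod (2*r) = v mod (2*r)" for u v :: nat
    using that by (metis div_mult_mod_eq)
  have fi: "f a \<in> Yi" if "a < t*r" for a using f(2) that by auto
  have gj: "g a \<in> Yj" if "a < t*r" for a using g(2) that by auto
  have hX: "h u \<in> X" if "u < 2*t*r" for u
  proof (cases "u mod (2*r) < r")
    case True then show ?thesis using fi[OF conjunct1[OF P1[OF that True]]] unfolding h_def Yi_def by auto
  next
    case False then show ?thesis using gj[OF conjunct1[OF P2[OF that False]]] unfolding h_def Yj_def by auto
  qed
  have hmod: "h u mod 5 = (if u mod (2*r) < r then i else j)" for u
    unfolding h_def using ij by auto
  have hdiv: "h u div 5 = (if u mod (2*r) < r then f(\<phi> u) else g(\<psi> u))" for u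
    unfolding h_def using ij by auto
  have ijne: "i \<noteq> j" using ij(3) c5adj_irrefl by metis
  show ?thesis unfolding contains_def
  proof (intro exI conjI)
    show "h ` turan_V (2*t*r) \<subseteq> X" using hX unfolding turan_V_def by auto
    show "inj_on h (turan_V (2*t*r))"
    proof (rule inj_onI)
      fix u v assume u: "u \<in> turan_V (2*t*r)" and v: "v \<in> turan_V (2*t*r)" and e: "h u = h v"
      have uu: "u < 2*t*r" "v < 2*t*r" using u v unfolding turan_V_def by auto
      have same: "(u mod (2*r) < r) = (v mod (2*r) < r)"
        using hmod[of u] hmod[of v] e ijne by (auto split: if_splits)
      show "u = v"
      proof (cases "u mod (2*r) < r")
        case True
        then have "f (\<phi> u) = f (\<phi> v)" using hdiv[of u] hdiv[of v] e same by auto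
        then have "\<phi> u = \<phi> v" using f(1) P1[OF uu(1) True] P1[OF uu(2)] True same
          unfolding inj_on_def by auto
        then show ?thesis using P1[OF uu(1) True] P1[OF uu(2)] True same recon by metis
      next
        case False
        then have "g (\<psi> u) = g (\<psi> v)" using hdiv[of u] hdiv[of v] e same by auto
        then have "\<psi> u = \<psi> v" using g(1) P2[OF uu(1) False] P2[OF uu(2)] False same
          unfolding inj_on_def by auto
        then have "u div (2*r) = v div (2*r)" "u mod (2*r) - r = v mod (2*r) - r"
          using P2[OF uu(1) False] P2[OF uu(2)] False same by metis+
        then show ?thesis using False same recon by (metis le_add_diff_inverse not_less)
      qed
    qed
    show "\<forall>u\<in>turan_V (2*t*r). \<forall>v\<in>turan_V (2*t*r). turan_E (2*t*r) (2*r) u v \<longrightarrow>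
        induced_E (blowE V E) X (h u) (h v)"
    proof (intro ballI impI)
      fix u v assume "u \<in> turan_V (2*t*r)" "v \<in> turan_V (2*t*r)" and te: "turan_E (2*t*r) (2*r) u v"
      then have uu: "u < 2*t*r" "v < 2*t*r" and mne: "u mod (2*r) \<noteq> v mod (2*r)"
        unfolding turan_V_def turan_E_def by auto
      have inB: "h w \<in> blowV V" if "w < 2*t*r" for w using hX[OF that] X by auto
      have "blowE V E (h u) (h v)"
      proof (cases "u mod (2*r) < r"; cases "v mod (2*r) < r")
        assume a: "u mod (2*r) < r" "v mod (2*r) < r"
        have "turan_E (t*r) r (\<phi> u) (\<phi> v)"
          using P1[OF uu(1) a(1)] P1[OF uu(2) a(2)] mne unfolding turan_E_def by auto
        then have "E (f (\<phi> u)) (f (\<phi> v))"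
          using f(3) P1[OF uu(1) a(1)] P1[OF uu(2) a(2)] unfolding induced_E_def by blast
        then show ?thesis unfolding blowE_def using inB uu hmod hdiv a by auto
      next
        assume a: "\<not> u mod (2*r) < r" "\<not> v mod (2*r) < r"
        have "u mod (2*r) - r \<noteq> v mod (2*r) - r" using a mne by linarith
        then have "turan_E (t*r) r (\<psi> u) (\<psi> v)"
          using P2[OF uu(1) a(1)] P2[OF uu(2) a(2)] unfolding turan_E_def by auto
        then have "E (g (\<psi> u)) (g (\<psi> v))"
          using g(3) P2[OF uu(1) a(1)] P2[OF uu(2) a(2)] unfolding induced_E_def by blast
        then show ?thesis unfolding blowE_def using inB uu hmod hdiv a by auto
      next
        assume a: "u mod (2*r) < r" "\<not> v mod (2*r) < r"
        have "c5adj i j" by fact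
        then show ?thesis unfolding blowE_def using inB uu hmod a by auto
      next
        assume a: "\<not> u mod (2*r) < r" "v mod (2*r) < r"
        have "c5adj j i" using ij(3) unfolding c5adj_def by auto
        then show ?thesis unfolding blowE_def using inB uu hmod a by auto
      qed
      then show "induced_E (blowE V E) X (h u) (h v)" unfolding induced_E_def using hX uu by auto
    qed
  qed
qed

lemma arrows_blow:
  assumes r1: "r \<ge> 1"
    and arr: "vertex_arrows V E (turan_V (t*r)) (turan_E (t*r) r) (turan_V (t*r)) (turan_E (t*r) r)"
  shows "vertex_arrows (blowV V) (blowE V E) (turan_V (2*t*r)) (turan_E (2*t*r) (2*r))
           (turan_V (2*t*r)) (turan_E (2*t*r) (2*r))"
  unfolding vertex_arrows_def
proof (intro allI impI)
  fix X1 X2 assume part: "X1 \<union> X2 = blowV V \<and> X1 \<inter> X2 = {}"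
  define P where "P k = contains {v\<in>V. 5*v+k \<in> X1} (induced_E E {v\<in>V. 5*v+k \<in> X1})
      (turan_V (t*r)) (turan_E (t*r) r)" for k
  define Q where "Q k = contains {v\<in>V. 5*v+k \<in> X2} (induced_E E {v\<in>V. 5*v+k \<in> X2})
      (turan_V (t*r)) (turan_E (t*r) r)" for k
  have PQ: "P k \<or> Q k" if "k < 5" for k
  proof -
    have "{v\<in>V. 5*v+k \<in> X1} \<union> {v\<in>V. 5*v+k \<in> X2} = V"
      using part that unfolding blowV_def by auto
    moreover have "{v\<in>V. 5*v+k \<in> X1} \<inter> {v\<in>V. 5*v+k \<in> X2} = {}" using part by auto
    ultimately show ?thesis using arr unfolding vertex_arrows_def P_def Q_def by blast
  qed
  obtain k where k: "k < 5" "P k = P (Suc k mod 5)" using odd_cycle by blast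
  define j where "j = Suc k mod 5"
  have j5: "j < 5" unfolding j_def by simp
  have adj: "c5adj k j" unfolding j_def c5adj_def by simp
  show "contains X1 (induced_E (blowE V E) X1) (turan_V (2*t*r)) (turan_E (2*t*r) (2*r)) \<or>
        contains X2 (induced_E (blowE V E) X2) (turan_V (2*t*r)) (turan_E (2*t*r) (2*r))"
  proof (cases "P k")
    case True
    then have "P j" using k j_def by simp
    then show ?thesis using combine[OF r1 k(1) j5 adj, of X1 V E t] True part
      unfolding P_def by blast
  next
    case False
    then have "\<not> P j" using k j_def by simp
    then have "Q k" "Q j" using PQ False k j5 by auto
    then show ?thesis using combine[OF r1 k(1) j5 adj, of X2 V E t] part
      unfolding Q_def by blast
  qed
qed

lemma blow_main:
  assumes "r \<ge> 1" "simple_graph V E"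
    "\<not> contains V E (complete_V (r+1)) (complete_E (r+1))"
    "vertex_arrows V E (turan_V (t*r)) (turan_E (t*r) r) (turan_V (t*r)) (turan_E (t*r) r)"
  shows "simple_graph (blowV V) (blowE V E) \<and>
    \<not> contains (blowV V) (blowE V E) (complete_V (2*r+1)) (complete_E (2*r+1)) \<and>
    vertex_arrows (blowV V) (blowE V E) (turan_V (2*t*r)) (turan_E (2*t*r) (2*r))
           (turan_V (2*t*r)) (turan_E (2*t*r) (2*r)) \<and>
    card (blowV V) = 5 * card V"
  using simple_blow[OF assms(2)] kfree_blow[OF assms(1,3)] arrows_blow[OF assms(1,4)]
    card_blowV assms(2) unfolding simple_graph_def by blast

lemma base_graph:
  assumes "t \<ge> 1"
  shows "simple_graph {..<2*t-1} (\<lambda>_ _. False) \<and>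
    \<not> contains {..<2*t-1} (\<lambda>_ _. False) (complete_V (1+1)) (complete_E (1+1)) \<and>
    vertex_arrows {..<2*t-1} (\<lambda>_ _. False) (turan_V (t*1)) (turan_E (t*1) 1) (turan_V (t*1)) (turan_E (t*1) 1)"
proof (intro conjI)
  show "simple_graph {..<2*t-1} (\<lambda>_ _. False)" unfolding simple_graph_def by simp
  show "\<not> contains {..<2*t-1} (\<lambda>_ _. False) (complete_V (1+1)) (complete_E (1+1))"
    unfolding contains_def complete_V_def complete_E_def
    by (metis lessThan_iff one_less_numeral_iff semiring_norm(76) zero_less_numeral zero_neq_one one_add_one)
  have big: "contains X (induced_E (\<lambda>_ _. False) X) (turan_V (t*1)) (turan_E (t*1) 1)"
    if fX: "finite X" "card X \<ge> t" for X
  proof -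
    obtain Y where Y: "Y \<subseteq> X" "card Y = t" using obtain_subset_with_card_n[OF fX(2)] by blast
    have "finite Y" using Y fX finite_subset by blast
    then obtain h where h: "bij_betw h {0..<t} Y" using ex_bij_betw_nat_finite Y(2) by blast
    have "{0..<t} = {..<t}" by auto
    then show ?thesis unfolding contains_def turan_V_def turan_E_def using h Y
      unfolding bij_betw_def by (intro exI[of _ h]) auto
  qed
  show "vertex_arrows {..<2*t-1} (\<lambda>_ _. False) (turan_V (t*1)) (turan_E (t*1) 1) (turan_V (t*1)) (turan_E (t*1) 1)"
    unfolding vertex_arrows_def
  proof (intro allI impI)
    fix X1 X2 :: "nat set" assume p: "X1 \<union> X2 = {..<2*t-1} \<and> X1 \<inter> X2 = {}"
    then have f: "finite X1" "finite X2" by (metis finite_Un finite_lessThan)+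
    have "card X1 + card X2 = 2*t-1" using p card_Un_disjoint[OF f] by (metis card_lessThan)
    then have "card X1 \<ge> t \<or> card X2 \<ge> t" using assms by linarith
    then show "contains X1 (induced_E (\<lambda>_ _. False) X1) (turan_V (t*1)) (turan_E (t*1) 1) \<or>
         contains X2 (induced_E (\<lambda>_ _. False) X2) (turan_V (t*1)) (turan_E (t*1) 1)"
      using big f by blast
  qed
qed

lemma Fv_le:
  assumes "simple_graph V E" "\<not> contains V E (complete_V k) (complete_E k)"
    "vertex_arrows V E A B C D"
  shows "Fv A B C D k \<le> enat (card V)"
  unfolding Fv_def by (rule Inf_lower) (use assms in blast)

lemma Fv_obtain:
  assumes "Fv A B C D k \<noteq> \<infinity>"
  shows "\<exists>V E. simple_graph V E \<and> \<not> contains V E (complete_V k) (complete_E k) \<and>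
    vertex_arrows V E A B C D \<and> Fv A B C D k = enat (card V)"
proof -
  let ?S = "{enat (card V) | V E. simple_graph V E \<and>
      \<not> contains V E (complete_V k) (complete_E k) \<and> vertex_arrows V E A B C D}"
  have "?S \<noteq> {}" using assms unfolding Fv_def by (metis Inf_empty top_enat_def)
  then have i: "Inf ?S = (LEAST x. x \<in> ?S)" unfolding Inf_enat_def by (rule if_not_P)
  have "\<exists>x. x \<in> ?S" using \<open>?S \<noteq> {}\<close> by (rule ex_in_conv[THEN iffD2])
  then have "(LEAST x. x \<in> ?S) \<in> ?S" by (rule LeastI_ex)
  then have "Inf ?S \<in> ?S" using i by simp
  then show ?thesis unfolding Fv_def by blast
qed

theorem mainTheorem9:
  shows "(\<forall>t r :: nat. t \<ge> 2 \<longrightarrow> r \<ge> 2 \<longrightarrow>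
           Fv (turan_V (2*t*r)) (turan_E (2*t*r) (2*r)) (turan_V (2*t*r)) (turan_E (2*t*r) (2*r)) (2*r+1)
           \<le> 5 * Fv (turan_V (t*r)) (turan_E (t*r) r) (turan_V (t*r)) (turan_E (t*r) r) (r+1))
       \<and> (\<forall>t :: nat. t \<ge> 2 \<longrightarrow>
           Fv (turan_V (4*t)) (turan_E (4*t) 4) (turan_V (4*t)) (turan_E (4*t) 4) 5
           \<le> enat (50*t - 25))"
proof (intro conjI allI impI)
  fix t r :: nat assume t2: "t \<ge> 2" and r2: "r \<ge> 2"
  show "Fv (turan_V (2*t*r)) (turan_E (2*t*r) (2*r)) (turan_V (2*t*r)) (turan_E (2*t*r) (2*r)) (2*r+1)
           \<le> 5 * Fv (turan_V (t*r)) (turan_E (t*r) r) (turan_V (t*r)) (turan_E (t*r) r) (r+1)"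
  proof (cases "Fv (turan_V (t*r)) (turan_E (t*r) r) (turan_V (t*r)) (turan_E (t*r) r) (r+1) = \<infinity>")
    case True
    have "(5::enat) * \<infinity> = \<infinity>" by (subst imult_is_infinity) simp
    then show ?thesis using True by simp
  next
    case False
    then obtain V E where G: "simple_graph V E" "\<not> contains V E (complete_V (r+1)) (complete_E (r+1))"
      "vertex_arrows V E (turan_V (t*r)) (turan_E (t*r) r) (turan_V (t*r)) (turan_E (t*r) r)"
      "Fv (turan_V (t*r)) (turan_E (t*r) r) (turan_V (t*r)) (turan_E (t*r) r) (r+1) = enat (card V)"
      using Fv_obtain by blast
    have r1: "r \<ge> 1" using r2 by simp
    note B = blow_main[OF r1 G(1-3)]
    have "Fv (turan_V (2*t*r)) (turan_E (2*t*r) (2*r)) (turan_V (2*t*r)) (turan_E (2*t*r) (2*r)) (2*r+1)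
        \<le> enat (card (blowV V))" using B by (intro Fv_le) auto
    also have "\<dots> = 5 * enat (card V)" using B by (simp add: numeral_eq_enat)
    finally show ?thesis using G(4) by simp
  qed
next
  fix t :: nat assume t2: "t \<ge> 2"
  note G0 = base_graph[of t]
  have G0': "simple_graph {..<2*t-1} (\<lambda>_ _. False)"
    "\<not> contains {..<2*t-1} (\<lambda>_ _. False) (complete_V (1+1)) (complete_E (1+1))"
    "vertex_arrows {..<2*t-1} (\<lambda>_ _. False) (turan_V (t*1)) (turan_E (t*1) 1) (turan_V (t*1)) (turan_E (t*1) 1)"
    using G0 t2 by auto
  note G1 = blow_main[OF _ G0'(1-3)]
  define V1 where "V1 = blowV {..<2*t-1}"
  define E1 where "E1 = blowE {..<2*t-1} (\<lambda>_ _. False)"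
  have e1: "2*t*1 = t*2" "2*1+1 = (2::nat)+1" "2*(1::nat) = 2" by simp_all
  have G1': "simple_graph V1 E1" "\<not> contains V1 E1 (complete_V (2+1)) (complete_E (2+1))"
    "vertex_arrows V1 E1 (turan_V (t*2)) (turan_E (t*2) 2) (turan_V (t*2)) (turan_E (t*2) 2)"
    "card V1 = 5 * (2*t-1)"
    using G1 unfolding V1_def E1_def e1 by auto
  note G2 = blow_main[OF _ G1'(1-3)]
  have e2: "2*t*2 = 4*t" "2*2+1 = (5::nat)" "2*(2::nat) = 4" by simp_all
  have G2': "simple_graph (blowV V1) (blowE V1 E1)"
    "\<not> contains (blowV V1) (blowE V1 E1) (complete_V 5) (complete_E 5)"
    "vertex_arrows (blowV V1) (blowE V1 E1) (turan_V (4*t)) (turan_E (4*t) 4) (turan_V (4*t)) (turan_E (4*t) 4)"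
    "card (blowV V1) = 5 * card V1"
    using G2 unfolding e2 by auto
  have "card (blowV V1) = 50*t - 25" using G2'(4) G1'(4) t2 by simp
  then show "Fv (turan_V (4*t)) (turan_E (4*t) 4) (turan_V (4*t)) (turan_E (4*t) 4) 5 \<le> enat (50*t - 25)"
    using Fv_le[OF G2'(1-3)] by simp
qed

end
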